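(* Consider the coalition game and the closed-loop system described in the context (Euler–Lagrange agent dynamics with controller (C), auxiliary dynamics (A), multiplier dynamics (M), gradient-tracking dynamics (T) and action-estimation dynamics (E)). Suppose Assumptions 1–4 of the context hold. If a constant state $(\mathbf{x}^*,\hat\mu^*,\hat d^*,\hat{\mathbf{x}}^*,\eta^*,\vartheta^*,\omega^*,\lambda^*,\rho^*,\xi^*,\zeta^*,s^* )$ (with all time derivatives of these closed-loop states equal to zero) is an equilibrium of this closed-loop system, then $\mathbf{x}^*=\operatorname{col}\{x_{11}^*,\dots,x_{Nm_N}^*\}$ is a Nash equilibrium of the coalition game.
   Context: Coalition game. There are $N$ coalitions $\mathbb{N}=\{1,\dots,N\}$; coalition $i$ has agents $\mathbb{V}_i=\{1,\dots,m_i\}$; $n=\sum_i m_i$. Agent $(i,j)$ has action $x_{ij}\in\mathbb{R}^r$; $\mathbf{x}_i=\operatorname{col}\{x_{i1},\dots,x_{im_i}\}$, $\mathbf{x}=\operatorname{col}\{\mathbf{x}_1,\dots,\mathbf{x}_N\}=(\mathbf{x}_i,\mathbf{x}_{-i})$. Agent $(i,j)$ has cost $J_{ij}(\mathbf{x})$; coalition $i$ has cost $J_i(\mathbf{x})=\frac1{m_i}\sum_{j=1}^{m_i}J_{ij}(\mathbf{x})$. Local constraints $\Omega_{ij}=\{x_{ij}\in\mathbb{R}^r: B_{ij}x_{ij}\le b_{ij}\}$ and coupling constraints $\mathbb{X}_i=\{\mathbf{x}_i: \sum_{j}G_{ij}x_{ij}\le\sum_j g_{ij}\}$, with constant matrices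 $B_{ij}$, $G_{ij}\in\mathbb{R}^{p\times r}$ and vectors $b_{ij},g_{ij}$ (inequalities elementwise). Let $\bm\Omega=\prod_{i,j}\Omega_{ij}$, $\mathbb{X}=\prod_i\mathbb{X}_i$. A profile $\mathbf{x}^\star$ is a Nash equilibrium (NE) if for every $i$, $J_i(\mathbf{x}_i^\star,\mathbf{x}_{-i}^\star)\le J_i(\mathbf{x}_i,\mathbf{x}_{-i}^\star)$ for all $\mathbf{x}_i$ with $(\mathbf{x}_i,\mathbf{x}_{-i}^\star)\in\bm\Omega\cap\mathbb{X}$. Assumption 1: each $J_{ij}$ is continuously differentiable and $\hbar$-strongly convex in $\mathbf{x}_i$ for any fixed $\mathbf{x}_{-i}\in\prod_{k\ne i}\bm\Omega_k$. Assumption 2: each $\partial J_{ij}/\partial\mathbf{x}_i$ is globally Lipschitz with constant $\ell$. Assumption 3: for each $i$ there is $\mathbf{x}_i$ with $\sum_j G_{ij}x_{ij}<\sum_j g_{ij}$ and $B_{ij}x_{ij}<b_{ij}$ for all $j$. Assumption 4: for each $i$ the communication graph $\mathcal{G}_i$ on $\mathbb{V}_i$ (adjacency $[a^i_{jl}]$, symmetric 0/1) is undirected and connected; the graph $\bar{\mathcal{G}}$ on all $n$ agents, reindexed so agent $(i,j)$ has index $\sum_{l<i}m_l+j$, with adjacency $[\bar a_{pl}]$ ($\bar a_{pl}=1$ iff $(p,l)$ is an edge), is directed and strongly connected. Agent dynamics: $E_{ij}(x_{ij})\ddot x_{ij}+C_{ij}(x_{ij},\dot x_{ij})\dot x_{ij}+D_{ij}(x_{ij})=u_{ij}+d_{ij}$,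 where $d_{ij}(t)$ is a disturbance bounded by an unknown constant $\tilde d_{ij}$, and the Euler–Lagrange structure admits a known regressor $\Upsilon_{ij}$ with $E_{ij}(x_{ij})\hat y+C_{ij}(x_{ij},\dot x_{ij})\tilde y+D_{ij}(x_{ij})=\Upsilon_{ij}(x_{ij},\dot x_{ij},\hat y,\tilde y)\mu_{ij}$ for all $\hat y,\tilde y$, with unknown constant $\mu_{ij}$. $\mathcal{P}_+$ is the elementwise projection onto $[0,\infty)$; $\operatorname{sgn}$ is elementwise sign. (C) $u_{ij}=\Upsilon_{ij}(x_{ij},\dot x_{ij},\ddot{\hat x}_{ij},\dot{\hat x}_{ij})\hat\mu_{ij}-\gamma e_{ij}-\operatorname{sgn}(e_{ij})\hat d_{ij}$, $\dot{\hat\mu}_{ij}=-\Upsilon_{ij}^\top e_{ij}$, $\dot{\hat d}_{ij}=e_{ij}^\top\operatorname{sgn}(e_{ij})$ ($\hat d_{ij}$ scalar), $e_{ij}=\dot x_{ij}-\dot{\hat x}_{ij}$, $\dot{\hat x}_{ij}=\vartheta_{ij}-(x_{ij}-\eta_{ij})$. (A) $\dot\eta_{ij}=\vartheta_{ij}$, $\dot\vartheta_{ij}=-\alpha\vartheta_{ij}-\big(\xi_{ijj}+G_{ij}^\top\mathcal{P}_+(\lambda_{ij})+B_{ij}^\top\mathcal{P}_+(\omega_{ij}+B_{ij}\eta_{ij}-b_{ij})\big)$. (M) $\dot\omega_{ij}=B_{ij}\vartheta_{ij}-\omega_{ij}+\mathcal{P}_+(\omega_{ij}+B_{ij}\eta_{ij}-b_{ij})$;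 $\dot\lambda_{ij}=-\lambda_{ij}+\mathcal{P}_+(\lambda_{ij})+G_{ij}\eta_{ij}-g_{ij}-\sum_l a^i_{jl}(\rho_{ij}-\rho_{il})-\sum_l a^i_{jl}(\mathcal{P}_+(\lambda_{ij})-\mathcal{P}_+(\lambda_{il}))$; $\dot\rho_{ij}=\sum_l a^i_{jl}(\mathcal{P}_+(\lambda_{ij})-\mathcal{P}_+(\lambda_{il}))$, with $\lambda_{ij},\rho_{ij}\in\mathbb{R}^p$. (T) for $k\in\mathbb{V}_i$: $\dot\xi_{ijk}=-\beta\big(\xi_{ijk}+\sum_l a^i_{jl}(\xi_{ijk}-\xi_{ilk})+\sum_l a^i_{jl}(\zeta_{ijk}-\zeta_{ilk})-\frac{\partial J_{ij}}{\partial x_{ik}}(\chi_{ij})\big)$, $\dot\zeta_{ijk}=\beta\sum_l a^i_{jl}(\xi_{ijk}-\xi_{ilk})$, where $\chi_{ij}=\operatorname{col}\{s_{p,1},\dots,s_{p,n}\}\in\mathbb{R}^{rn}$ with $p=\sum_{l<i}m_l+j$, and $\frac{\partial J_{ij}}{\partial x_{ik}}(\chi_{ij})$ is the gradient of $J_{ij}$ with respect to the block of agent $(i,k)$ evaluated at $\chi_{ij}$. (E) Writing $\varsigma_p:=\eta_{ij}$ for the reindexed agent $p$, each agent $p$ keeps estimates $s_{p,l}\in\mathbb{R}^r$ ($l\ne p$), $s_{p,p}=\varsigma_p$, and with $s_{l,-p}=\operatorname{col}\{s_{l,q}\}_{q\ne p}$: $\dot s_{p,-p}=-\kappa\sum_{l=1}^n\bar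 a_{pl}(s_{p,-p}-s_{l,-p})$. Here $\alpha,\beta,\gamma,\kappa>0$ are constant gains. *)

theory Defs
  imports "HOL-Analysis.Analysis"
begin

text \<open>Agents are the elements of a finite type 'a; coalitions the elements of a finite
type 'c; the map c assigns to each agent its coalition.  An action profile is an element
of (real^'r)^'a, i.e. the stacked vector col of all agents' actions in R^r.\<close>

definition vupd :: "'v^'a \<Rightarrow> 'a \<Rightarrow> 'v \<Rightarrow> 'v^'a" where
  "vupd x q z = (\<chi> l. if l = q then z else x $ l)"

definition pgrad :: "((real^'r)^'a \<Rightarrow> real) \<Rightarrow> (real^'r)^'a \<Rightarrow> 'a \<Rightarrow> real^'r" where
  "pgrad f x q = (SOME g. GDERIV (\<lambda>z. f (vupd x q z)) (x $ q) :> g)"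

definition cgrad :: "('a \<Rightarrow> 'c) \<Rightarrow> 'c \<Rightarrow> ((real^'r)^'a \<Rightarrow> real) \<Rightarrow> (real^'r)^'a \<Rightarrow> (real^'r)^'a" where
  "cgrad c i f x = (\<chi> q. if c q = i then pgrad f x q else 0)"

definition pplus :: "real^'p \<Rightarrow> real^'p" where
  "pplus v = (\<chi> k. max 0 (v $ k))"

definition vsgn :: "real^'r \<Rightarrow> real^'r" where
  "vsgn v = (\<chi> k. sgn (v $ k))"

text \<open>Local constraint set Omega_q = {z. B_q z \<le> b_q}; the matrix B_q has nq q rows,
row k being Brow q k, and b_q has entries bv q k (k < nq q).\<close>
definition Omega :: "('a \<Rightarrow> nat) \<Rightarrow> ('a \<Rightarrow> nat \<Rightarrow> real^'r) \<Rightarrow> ('a \<Rightarrow> nat \<Rightarrow> real) \<Rightarrow> 'a \<Rightarrow> (real^'r) set" where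
  "Omega nq Brow bv q = {z. \<forall>k<nq q. Brow q k \<bullet> z \<le> bv q k}"

definition Xset :: "('a \<Rightarrow> 'c) \<Rightarrow> ('a \<Rightarrow> real^'r^'p) \<Rightarrow> ('a \<Rightarrow> real^'p) \<Rightarrow> 'c \<Rightarrow> ((real^'r)^'a) set" where
  "Xset c G g i = {x. \<forall>k. (\<Sum>q\<in>{q. c q = i}. G q *v (x $ q)) $ k \<le> (\<Sum>q\<in>{q. c q = i}. g q) $ k}"

definition feasible :: "('a \<Rightarrow> 'c) \<Rightarrow> ('a \<Rightarrow> nat) \<Rightarrow> ('a \<Rightarrow> nat \<Rightarrow> real^'r) \<Rightarrow> ('a \<Rightarrow> nat \<Rightarrow> real)
    \<Rightarrow> ('a \<Rightarrow> real^'r^'p) \<Rightarrow> ('a \<Rightarrow> real^'p) \<Rightarrow> (real^'r)^'a \<Rightarrow> bool" where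
  "feasible c nq Brow bv G g x \<longleftrightarrow> (\<forall>q. x $ q \<in> Omega nq Brow bv q) \<and> (\<forall>i. x \<in> Xset c G g i)"

definition coal_cost :: "('a \<Rightarrow> 'c) \<Rightarrow> ('a \<Rightarrow> (real^'r)^'a \<Rightarrow> real) \<Rightarrow> 'c \<Rightarrow> (real^'r)^'a \<Rightarrow> real" where
  "coal_cost c J i x = (1 / real (card {q. c q = i})) * (\<Sum>q\<in>{q. c q = i}. J q x)"

definition is_NE :: "('a \<Rightarrow> 'c) \<Rightarrow> ('a \<Rightarrow> (real^'r)^'a \<Rightarrow> real) \<Rightarrow> ('a \<Rightarrow> nat) \<Rightarrow> ('a \<Rightarrow> nat \<Rightarrow> real^'r)
    \<Rightarrow> ('a \<Rightarrow> nat \<Rightarrow> real) \<Rightarrow> ('a \<Rightarrow> real^'r^'p) \<Rightarrow> ('a \<Rightarrow> real^'p) \<Rightarrow> (real^'r)^'a \<Rightarrow> bool" where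
  "is_NE c J nq Brow bv G g xs \<longleftrightarrow>
     (\<forall>i y. (\<forall>q. c q \<noteq> i \<longrightarrow> y $ q = xs $ q) \<and> feasible c nq Brow bv G g y
        \<longrightarrow> coal_cost c J i xs \<le> coal_cost c J i y)"

definition strongly_convex_block :: "('a \<Rightarrow> 'c) \<Rightarrow> ('a \<Rightarrow> nat) \<Rightarrow> ('a \<Rightarrow> nat \<Rightarrow> real^'r)
    \<Rightarrow> ('a \<Rightarrow> nat \<Rightarrow> real) \<Rightarrow> 'c \<Rightarrow> real \<Rightarrow> ((real^'r)^'a \<Rightarrow> real) \<Rightarrow> bool" where
  "strongly_convex_block c nq Brow bv i h f \<longleftrightarrow>
     (\<forall>x y t. (\<forall>q. c q \<noteq> i \<longrightarrow> x $ q \<in> Omega nq Brow bv q \<and> y $ q = x $ q) \<and> 0 \<le> t \<and> t \<le> 1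
        \<longrightarrow> f ((1 - t) *\<^sub>R x + t *\<^sub>R y)
            \<le> (1 - t) * f x + t * f y - h / 2 * t * (1 - t) * (norm (x - y))\<^sup>2)"

text \<open>Regressor times parameter vector: the regressor Upsilon_q(x,xd,yh,yt) has
nmu q columns (column k given by Ups q x xd yh yt k) and m is the parameter vector.\<close>
definition regr :: "('a \<Rightarrow> nat) \<Rightarrow> ('a \<Rightarrow> real^'r \<Rightarrow> real^'r \<Rightarrow> real^'r \<Rightarrow> real^'r \<Rightarrow> nat \<Rightarrow> real^'r)
    \<Rightarrow> 'a \<Rightarrow> real^'r \<Rightarrow> real^'r \<Rightarrow> real^'r \<Rightarrow> real^'r \<Rightarrow> (nat \<Rightarrow> real) \<Rightarrow> real^'r" where
  "regr nmu Ups q x xd yh yt m = (\<Sum>k<nmu q. m k *\<^sub>R Ups q x xd yh yt k)"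

end

theory Submission
  imports Defs
begin



lemma bl_axis: "bounded_linear (axis p :: real^'r \<Rightarrow> (real^'r)^'a)"
proof -
  have "linear (axis p :: real^'r \<Rightarrow> (real^'r)^'a)"
    by (rule linearI) (auto simp: axis_def vec_eq_iff)
  then show ?thesis by (simp add: linear_conv_bounded_linear)
qed

lemma pgrad_eq:
  fixes f :: "(real^'r)^'a \<Rightarrow> real"
  assumes "GDERIV f x :> D" shows "pgrad f x p = D $ p"
proof -
  have vu: "(\<lambda>z. vupd x p z) = (\<lambda>z. (x - axis p (x$p)) + axis p z)"
    by (auto simp: vupd_def axis_def vec_eq_iff fun_eq_iff)
  have d1: "((\<lambda>z. vupd x p z) has_derivative axis p) (at (x$p))"
  proof -
    have "((\<lambda>z. (x - axis p (x$p)) + axis p z) has_derivative (\<lambda>h. 0 + axis p h)) (at (x$p))"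
      by (intro has_derivative_add has_derivative_const bounded_linear_imp_has_derivative[OF bl_axis])
    then show ?thesis unfolding vu by simp
  qed
  have xx: "vupd x p (x$p) = x" by (auto simp: vupd_def vec_eq_iff)
  have d2: "(f has_derivative (\<lambda>h. inner h D)) (at (vupd x p (x$p)))"
    using assms xx by (simp add: gderiv_def)
  have d3: "((\<lambda>z. f (vupd x p z)) has_derivative (\<lambda>h. inner (axis p h) D)) (at (x$p))"
    using has_derivative_compose[OF d1 d2] by (simp add: o_def)
  have e: "(\<lambda>h. inner (axis p h) D) = (\<lambda>h. inner h (D$p))"
    by (simp add: inner_axis')
  have G: "GDERIV (\<lambda>z. f (vupd x p z)) (x$p) :> D$p"
    using d3 e by (simp add: gderiv_def)
  show ?thesis unfolding pgrad_def
  proof (rule some_equality)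
    fix g assume "GDERIV (\<lambda>z. f (vupd x p z)) (x $ p) :> g"
    then have "(\<lambda>h. inner h g) = (\<lambda>h. inner h (D$p))"
      using G by (simp add: gderiv_def has_derivative_unique)
    then have "inner (g - D$p) g = inner (g - D$p) (D$p)" by metis
    then have "inner (g - D$p) (g - D$p) = 0" by (simp add: inner_diff_right)
    then show "g = D$p" by simp
  qed (rule G)
qed



lemma tangent:
  fixes f :: "'v::real_inner \<Rightarrow> real"
  assumes df: "(f has_derivative (\<lambda>h. inner h D)) (at x)"
  and cv: "\<And>t. 0 \<le> t \<Longrightarrow> t \<le> 1 \<Longrightarrow> f (x + t *\<^sub>R (y - x)) \<le> (1-t) * f x + t * f y"
  shows "inner (y - x) D \<le> f y - f x"
proof -
  define h where "h = (\<lambda>t. f (x + t *\<^sub>R (y-x)))"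
  have d0: "((\<lambda>t. x + t *\<^sub>R (y-x)) has_derivative (\<lambda>t. t *\<^sub>R (y-x))) (at 0)"
    by (auto intro!: derivative_eq_intros)
  have df': "(f has_derivative (\<lambda>h. inner h D)) (at (x + 0 *\<^sub>R (y-x)))" using df by simp
  have "(h has_derivative (\<lambda>t. inner (t *\<^sub>R (y-x)) D)) (at 0)"
    using has_derivative_compose[OF d0 df'] by (simp add: o_def h_def)
  then have "(h has_field_derivative inner (y-x) D) (at 0)"
    unfolding has_field_derivative_def by (simp add: mult.commute[of _ "inner (y-x) D"])
  then have "(h has_field_derivative inner (y-x) D) (at 0 within {0<..})"
    by (rule has_field_derivative_at_within)
  then have L: "((\<lambda>t. (h t - h 0)/(t - 0)) \<longlongrightarrow> inner (y-x) D) (at_right 0)"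
    by (simp add: has_field_derivative_iff)
  have ev: "eventually (\<lambda>t. (h t - h 0)/(t-0) \<le> f y - f x) (at_right (0::real))"
  proof (rule eventually_at_rightI[of 0 1])
    fix t :: real assume t: "t \<in> {0<..<1}"
    then have "h t \<le> (1-t) * f x + t * f y" using cv[of t] by (simp add: h_def)
    then have "h t - h 0 \<le> t * (f y - f x)" by (simp add: h_def algebra_simps)
    then show "(h t - h 0)/(t-0) \<le> f y - f x" using t by (simp add: divide_le_eq mult.commute)
  qed simp
  show ?thesis using tendsto_upperbound[OF L ev] by simp
qed

lemma path_max:
  fixes v :: "'a \<Rightarrow> real"
  assumes R: "R\<^sup>*\<^sup>* x y"
  and step: "\<And>u w. u \<in> T \<Longrightarrow> v u = M \<Longrightarrow> u \<noteq> q \<Longrightarrow> R u w \<Longrightarrow> w \<in> T \<and> v w = M"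
  shows "x \<in> T \<Longrightarrow> v x = M \<Longrightarrow> v q = M \<or> (y \<in> T \<and> v y = M)"
  using R
proof (induction rule: rtranclp_induct)
  case base then show ?case by simp
next
  case (step y z)
  then show ?case using assms(2) by metis
qed

lemma consensus_le:
  fixes v :: "'a::finite \<Rightarrow> real"
  assumes w01: "\<forall>p l. w p l = 0 \<or> w p l = 1"
  and eq: "\<forall>p\<in>T - {q}. (\<Sum>l\<in>UNIV. w p l * (v p - v l)) = 0"
  and closed: "\<forall>p l. p \<in> T \<longrightarrow> w p l \<noteq> 0 \<longrightarrow> l \<in> T"
  and conn: "\<forall>p\<in>T. (\<lambda>u z. w u z = 1)\<^sup>*\<^sup>* p q"
  and qT: "q \<in> T"
  shows "\<forall>p\<in>T. v p \<le> v q"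
proof -
  have fin: "finite T" by simp
  define M where "M = Max (v ` T)"
  have Mge: "\<forall>p\<in>T. v p \<le> M" unfolding M_def using fin by auto
  obtain p0 where p0: "p0 \<in> T" "v p0 = M" unfolding M_def using fin qT
    by (metis (mono_tags, lifting) Max_in empty_iff finite_imageI image_iff image_is_empty)
  have st: "w' \<in> T \<and> v w' = M" if u: "u \<in> T" "v u = M" "u \<noteq> q" "w u w' = 1" for u w'
  proof -
    have s0: "(\<Sum>l\<in>UNIV. w u l * (v u - v l)) = 0" using eq u by auto
    have nn: "\<forall>l\<in>UNIV. 0 \<le> w u l * (v u - v l)"
    proof
      fix l :: 'a
      show "0 \<le> w u l * (v u - v l)"
      proof (cases "w u l = 0")
        case False
        then have "l \<in> T" "w u l = 1" using closed u w01 by auto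
        then show ?thesis using Mge u by auto
      qed simp
    qed
    have "w u w' * (v u - v w') = 0"
      using sum_nonneg_eq_0_iff[of UNIV "\<lambda>l. w u l * (v u - v l)"] s0 nn by simp
    moreover have "w' \<in> T" using closed u by auto
    ultimately show ?thesis using u by simp
  qed
  have "v q = M \<or> (q \<in> T \<and> v q = M)"
    by (rule path_max[where R="\<lambda>u z. w u z = 1" and T=T and v=v and M=M and q=q, OF conn[rule_format, OF p0(1)] _ p0])
       (use st in blast)
  then show ?thesis using Mge by auto
qed

lemma consensus:
  fixes V :: "'a::finite \<Rightarrow> real^'n"
  assumes w01: "\<forall>p l. w p l = 0 \<or> w p l = 1"
  and eq: "\<forall>p\<in>T - {q}. (\<Sum>l\<in>UNIV. w p l *\<^sub>R (V p - V l)) = 0"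
  and closed: "\<forall>p l. p \<in> T \<longrightarrow> w p l \<noteq> 0 \<longrightarrow> l \<in> T"
  and conn: "\<forall>p\<in>T. (\<lambda>u z. w u z = 1)\<^sup>*\<^sup>* p q"
  and qT: "q \<in> T"
  shows "\<forall>p\<in>T. V p = V q"
proof (intro ballI)
  fix p assume pT: "p \<in> T"
  show "V p = V q"
  proof (subst vec_eq_iff, intro allI)
    fix k
    have e1: "\<forall>p\<in>T - {q}. (\<Sum>l\<in>UNIV. w p l * ((\<lambda>p. V p $ k) p - (\<lambda>p. V p $ k) l)) = 0"
    proof
      fix p assume "p \<in> T - {q}"
      then have "(\<Sum>l\<in>UNIV. w p l *\<^sub>R (V p - V l)) $ k = 0" using eq by simp
      then show "(\<Sum>l\<in>UNIV. w p l * ((\<lambda>p. V p $ k) p - (\<lambda>p. V p $ k) l)) = 0"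
        by (simp add: sum_component)
    qed
    have e2: "\<forall>p\<in>T - {q}. (\<Sum>l\<in>UNIV. w p l * ((\<lambda>p. - V p $ k) p - (\<lambda>p. - V p $ k) l)) = 0"
    proof
      fix p assume "p \<in> T - {q}"
      then have "(\<Sum>l\<in>UNIV. w p l * ((\<lambda>p. V p $ k) p - (\<lambda>p. V p $ k) l)) = 0" using e1 by blast
      then have "- (\<Sum>l\<in>UNIV. w p l * ((\<lambda>p. V p $ k) p - (\<lambda>p. V p $ k) l)) = 0" by simp
      then show "(\<Sum>l\<in>UNIV. w p l * ((\<lambda>p. - V p $ k) p - (\<lambda>p. - V p $ k) l)) = 0"
        by (simp add: sum_negf[symmetric] algebra_simps)
    qed
    have "V p $ k \<le> V q $ k" using consensus_le[OF w01 e1 closed conn qT] pT by simp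
    moreover have "- V p $ k \<le> - V q $ k" using consensus_le[OF w01 e2 closed conn qT] pT by simp
    ultimately show "V p $ k = V q $ k" by simp
  qed
qed

lemma lap_sum_zero:
  fixes Z :: "'a::finite \<Rightarrow> 'v::real_vector"
  assumes sym: "\<forall>p l. w p l = w l p"
  and closed: "\<forall>p l. p \<in> T \<longrightarrow> w p l \<noteq> 0 \<longrightarrow> l \<in> T"
  shows "(\<Sum>p\<in>T. \<Sum>l\<in>UNIV. w p l *\<^sub>R (Z p - Z l)) = 0"
proof -
  have r: "(\<Sum>l\<in>UNIV. w p l *\<^sub>R (Z p - Z l)) = (\<Sum>l\<in>T. w p l *\<^sub>R (Z p - Z l))" if "p \<in> T" for p
    by (rule sum.mono_neutral_right) (use closed that in auto)
  define S where "S = (\<Sum>p\<in>T. \<Sum>l\<in>T. w p l *\<^sub>R (Z p - Z l))"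
  have "S = (\<Sum>l\<in>T. \<Sum>p\<in>T. w p l *\<^sub>R (Z p - Z l))" unfolding S_def by (rule sum.swap)
  also have "\<dots> = (\<Sum>l\<in>T. \<Sum>p\<in>T. - (w l p *\<^sub>R (Z l - Z p)))"
    by (intro sum.cong refl) (simp add: sym algebra_simps)
  also have "\<dots> = - S" unfolding S_def by (simp add: sum_negf)
  finally have SS: "S = - S" .
  have "(2::real) *\<^sub>R S = S + S" by (rule scaleR_2)
  also have "\<dots> = 0" using SS by (metis add.right_inverse)
  finally have "S = 0" by simp
  then show ?thesis using r S_def by simp
qed


lemma pp_orth: "inner (pplus v) (v - pplus v) = 0"
  unfolding inner_vec_def by (rule sum.neutral) (simp add: pplus_def max_def)
lemma pp_nonneg: "0 \<le> pplus v $ k"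
  by (simp add: pplus_def)
lemma inner_nonpos: fixes L v :: "real^'n" shows "(\<forall>k. 0 \<le> L$k) \<Longrightarrow> (\<forall>k. v$k \<le> 0) \<Longrightarrow> inner L v \<le> 0"
  by (simp add: inner_vec_def sum_nonpos mult_nonneg_nonpos)
lemma transp_inner: fixes G :: "real^'r^'p" shows "inner w (transpose G *v L) = inner L (G *v w)"
  by (metis dot_lmul_matrix inner_commute vector_transpose_matrix transpose_transpose)
lemma lam_rel: fixes l pl v r :: "'v::real_vector" shows "- l + pl + v - r - 0 = 0 \<Longrightarrow> v = (l - pl) + r"
  by (simp add: algebra_simps eq_neg_iff_add_eq_0)
lemma om_rel: fixes om z :: real shows "- om + max 0 (om + z) = 0 \<Longrightarrow> 0 \<le> om \<and> z \<le> 0 \<and> om * z = 0 \<and> max 0 (om + z) = om"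
  by (auto simp: max_def split: if_splits)


theorem lemma5:
  fixes c :: "'a::finite \<Rightarrow> 'c::finite"
    and J :: "'a \<Rightarrow> (real^'r::finite)^'a \<Rightarrow> real"
    and nq :: "'a \<Rightarrow> nat" and Brow :: "'a \<Rightarrow> nat \<Rightarrow> real^'r" and bv :: "'a \<Rightarrow> nat \<Rightarrow> real"
    and G :: "'a \<Rightarrow> real^'r^'p::finite" and g :: "'a \<Rightarrow> real^'p"
    and a abar :: "'a \<Rightarrow> 'a \<Rightarrow> real"
    and hbar ell alpha beta gamma kappa :: real
    and E :: "'a \<Rightarrow> real^'r \<Rightarrow> real^'r^'r"
    and Cm :: "'a \<Rightarrow> real^'r \<Rightarrow> real^'r \<Rightarrow> real^'r^'r"
    and Dm :: "'a \<Rightarrow> real^'r \<Rightarrow> real^'r"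
    and d :: "'a \<Rightarrow> real \<Rightarrow> real^'r"
    and nmu :: "'a \<Rightarrow> nat"
    and Ups :: "'a \<Rightarrow> real^'r \<Rightarrow> real^'r \<Rightarrow> real^'r \<Rightarrow> real^'r \<Rightarrow> nat \<Rightarrow> real^'r"
    and mu :: "'a \<Rightarrow> nat \<Rightarrow> real"
    and xs :: "'a \<Rightarrow> real^'r" and muh :: "'a \<Rightarrow> nat \<Rightarrow> real" and dh :: "'a \<Rightarrow> real"
    and xh eta th :: "'a \<Rightarrow> real^'r" and om :: "'a \<Rightarrow> nat \<Rightarrow> real"
    and lam rho :: "'a \<Rightarrow> real^'p"
    and xi zeta s :: "'a \<Rightarrow> 'a \<Rightarrow> real^'r"
    and e u :: "'a \<Rightarrow> real^'r"
  assumes coal_nonempty: "\<forall>i. \<exists>q. c q = i"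
    \<comment> \<open>Assumption 1\<close>
    and A1_C1: "\<forall>p. \<exists>DJ. continuous_on UNIV DJ \<and> (\<forall>x. GDERIV (J p) x :> DJ x)"
    and A1_hbar: "hbar > 0"
    and A1_sc: "\<forall>p. strongly_convex_block c nq Brow bv (c p) hbar (J p)"
    \<comment> \<open>Assumption 2\<close>
    and A2: "\<forall>p x y. norm (cgrad c (c p) (J p) x - cgrad c (c p) (J p) y) \<le> ell * norm (x - y)"
    \<comment> \<open>Assumption 3\<close>
    and A3: "\<forall>i. \<exists>x::(real^'r)^'a.
               (\<forall>k. (\<Sum>q\<in>{q. c q = i}. G q *v (x $ q)) $ k < (\<Sum>q\<in>{q. c q = i}. g q) $ k)
             \<and> (\<forall>q. c q = i \<longrightarrow> (\<forall>k<nq q. Brow q k \<bullet> (x $ q) < bv q k))"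
    \<comment> \<open>Assumption 4\<close>
    and A4_a01: "\<forall>p l. a p l = 0 \<or> a p l = 1"
    and A4_asym: "\<forall>p l. a p l = a l p"
    and A4_ain: "\<forall>p l. a p l \<noteq> 0 \<longrightarrow> c p = c l"
    and A4_aconn: "\<forall>p l. c p = c l \<longrightarrow> (\<lambda>u v. a u v = 1)\<^sup>*\<^sup>* p l"
    and A4_abar01: "\<forall>p l. abar p l = 0 \<or> abar p l = 1"
    and A4_abarconn: "\<forall>p l. (\<lambda>u v. abar u v = 1)\<^sup>*\<^sup>* p l"
    \<comment> \<open>Euler--Lagrange structure and bounded disturbances\<close>
    and d_bdd: "\<forall>p. \<exists>dt. \<forall>t. norm (d p t) \<le> dt"
    and regressor: "\<forall>p x xd yh yt. E p x *v yh + Cm p x xd *v yt + Dm p x = regr nmu Ups p x xd yh yt (mu p)"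
    \<comment> \<open>gains\<close>
    and gains: "alpha > 0" "beta > 0" "gamma > 0" "kappa > 0"
    \<comment> \<open>controller (C) evaluated at the constant state: xdot = 0, xhat-dot = th - (x - eta),
        xhat-ddot = 0 (all time derivatives vanish)\<close>
    and e_def: "\<forall>p. e p = 0 - (th p - (xs p - eta p))"
    and u_def: "\<forall>p. u p = regr nmu Ups p (xs p) 0 0 (th p - (xs p - eta p)) (muh p)
                          - gamma *\<^sub>R e p - dh p *\<^sub>R vsgn (e p)"
    \<comment> \<open>equilibrium conditions: all time derivatives of the closed-loop states are zero\<close>
    and eq_EL: "\<forall>p t. E p (xs p) *v 0 + Cm p (xs p) 0 *v 0 + Dm p (xs p) = u p + d p t"
    and eq_xhat: "\<forall>p. th p - (xs p - eta p) = 0"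
    and eq_muh: "\<forall>p. \<forall>k<nmu p. - (Ups p (xs p) 0 0 (th p - (xs p - eta p)) k \<bullet> e p) = 0"
    and eq_dh: "\<forall>p. e p \<bullet> vsgn (e p) = 0"
    and eq_eta: "\<forall>p. th p = 0"
    and eq_th: "\<forall>p. - alpha *\<^sub>R th p
                   - (xi p p + transpose (G p) *v pplus (lam p)
                      + (\<Sum>k<nq p. max 0 (om p k + Brow p k \<bullet> eta p - bv p k) *\<^sub>R Brow p k)) = 0"
    and eq_om: "\<forall>p. \<forall>k<nq p. Brow p k \<bullet> th p - om p k + max 0 (om p k + Brow p k \<bullet> eta p - bv p k) = 0"
    and eq_lam: "\<forall>p. - lam p + pplus (lam p) + (G p *v eta p - g p)
                   - (\<Sum>l\<in>UNIV. a p l *\<^sub>R (rho p - rho l))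
                   - (\<Sum>l\<in>UNIV. a p l *\<^sub>R (pplus (lam p) - pplus (lam l))) = 0"
    and eq_rho: "\<forall>p. (\<Sum>l\<in>UNIV. a p l *\<^sub>R (pplus (lam p) - pplus (lam l))) = 0"
    and eq_xi: "\<forall>p k. c k = c p \<longrightarrow>
                  - beta *\<^sub>R (xi p k + (\<Sum>l\<in>UNIV. a p l *\<^sub>R (xi p k - xi l k))
                      + (\<Sum>l\<in>UNIV. a p l *\<^sub>R (zeta p k - zeta l k))
                      - pgrad (J p) (\<chi> q. s p q) k) = 0"
    and eq_zeta: "\<forall>p k. c k = c p \<longrightarrow> beta *\<^sub>R (\<Sum>l\<in>UNIV. a p l *\<^sub>R (xi p k - xi l k)) = 0"
    and s_own: "\<forall>p. s p p = eta p"
    and eq_s: "\<forall>p q. q \<noteq> p \<longrightarrow> - kappa *\<^sub>R (\<Sum>l\<in>UNIV. abar p l *\<^sub>R (s p q - s l q)) = 0"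
  shows "is_NE c J nq Brow bv G g (\<chi> q. xs q)"
  proof -
  have bne: "beta \<noteq> 0" "kappa \<noteq> 0" using gains by auto
  have th0: "\<And>p. th p = 0" using eq_eta by simp
  have ex: "\<And>p. eta p = xs p"
  proof -
    fix p show "eta p = xs p" using eq_xhat[rule_format, of p] th0[of p] by simp
  qed
  define X where "X = (\<chi> q. xs q)"
  have Xq: "\<And>q. X $ q = xs q" by (simp add: X_def)
  have sall: "\<And>p q. s p q = xs q"
  proof -
    fix p q
    have "\<forall>p\<in>UNIV. s p q = s q q"
    proof (rule consensus[where w=abar and T=UNIV and q=q and V="\<lambda>l. s l q"])
      show "\<forall>p l. abar p l = 0 \<or> abar p l = 1" by (rule A4_abar01)
      show "\<forall>p\<in>UNIV - {q}. (\<Sum>l\<in>UNIV. abar p l *\<^sub>R (s p q - s l q)) = 0" using eq_s bne by auto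
      show "\<forall>p l. p \<in> UNIV \<longrightarrow> abar p l \<noteq> 0 \<longrightarrow> l \<in> UNIV" by simp
      show "\<forall>p\<in>UNIV. (\<lambda>u z. abar u z = 1)\<^sup>*\<^sup>* p q" using A4_abarconn by simp
    qed simp
    then show "s p q = xs q" using s_own ex by simp
  qed
  have sX: "\<And>p. (\<chi> q. s p q) = X" by (simp add: sall X_def)
  obtain DJ where DJ: "\<And>p x. GDERIV (J p) x :> DJ p x"
  proof -
    from A1_C1 have "\<forall>p. \<exists>DJ. \<forall>x. GDERIV (J p) x :> DJ x" by blast
    then obtain F where "\<forall>p x. GDERIV (J p) x :> F p x" by metis
    then show ?thesis using that by blast
  qed
  have pg: "\<And>p k. pgrad (J p) X k = DJ p X $ k" using pgrad_eq DJ by blast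
  have xicons: "\<And>p k. c p = c k \<Longrightarrow> xi p k = xi k k"
  proof -
    fix p k assume pk: "c p = c k"
    have "\<forall>p\<in>{p. c p = c k}. xi p k = xi k k"
    proof (rule consensus[where w=a and T="{p. c p = c k}" and q=k and V="\<lambda>l. xi l k"])
      show "\<forall>p l. a p l = 0 \<or> a p l = 1" by (rule A4_a01)
      show "\<forall>p\<in>{p. c p = c k} - {k}. (\<Sum>l\<in>UNIV. a p l *\<^sub>R (xi p k - xi l k)) = 0"
      proof
        fix p assume "p \<in> {p. c p = c k} - {k}"
        then have "c k = c p" by simp
        then have "beta *\<^sub>R (\<Sum>l\<in>UNIV. a p l *\<^sub>R (xi p k - xi l k)) = 0" using eq_zeta[rule_format, of k p] by simp
        then show "(\<Sum>l\<in>UNIV. a p l *\<^sub>R (xi p k - xi l k)) = 0" using bne by simp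
      qed
      show "\<forall>p l. p \<in> {p. c p = c k} \<longrightarrow> a p l \<noteq> 0 \<longrightarrow> l \<in> {p. c p = c k}"
      proof (intro allI impI)
        fix p l assume "p \<in> {p. c p = c k}" "a p l \<noteq> 0"
        then show "l \<in> {p. c p = c k}" using A4_ain[rule_format, of p l] by simp
      qed
      show "\<forall>p\<in>{p. c p = c k}. (\<lambda>u z. a u z = 1)\<^sup>*\<^sup>* p k"
      proof
        fix p assume "p \<in> {p. c p = c k}"
        then show "(\<lambda>u z. a u z = 1)\<^sup>*\<^sup>* p k" using A4_aconn[rule_format, of p k] by simp
      qed
    qed simp
    then show "xi p k = xi k k" using pk by blast
  qed
  have xisum: "\<And>k. real (card {p. c p = c k}) *\<^sub>R xi k k = (\<Sum>p\<in>{p. c p = c k}. DJ p X $ k)"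
  proof -
    fix k
    let ?T = "{p. c p = c k}"
    have each: "xi p k + (\<Sum>l\<in>UNIV. a p l *\<^sub>R (zeta p k - zeta l k)) = DJ p X $ k" if "p \<in> ?T" for p
    proof -
      have ck: "c k = c p" using that by simp
      have L1: "(\<Sum>l\<in>UNIV. a p l *\<^sub>R (xi p k - xi l k)) = 0" using eq_zeta[rule_format, OF ck] bne by simp
      have "xi p k + (\<Sum>l\<in>UNIV. a p l *\<^sub>R (xi p k - xi l k)) + (\<Sum>l\<in>UNIV. a p l *\<^sub>R (zeta p k - zeta l k)) - pgrad (J p) (\<chi> q. s p q) k = 0"
        using eq_xi[rule_format, OF ck] bne by simp
      then show ?thesis using L1 sX pg by simp
    qed
    have s1: "(\<Sum>p\<in>?T. xi p k + (\<Sum>l\<in>UNIV. a p l *\<^sub>R (zeta p k - zeta l k))) = (\<Sum>p\<in>?T. DJ p X $ k)"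
      using each by (intro sum.cong refl) auto
    have s2: "(\<Sum>p\<in>?T. xi p k + (\<Sum>l\<in>UNIV. a p l *\<^sub>R (zeta p k - zeta l k)))
        = (\<Sum>p\<in>?T. xi p k) + (\<Sum>p\<in>?T. \<Sum>l\<in>UNIV. a p l *\<^sub>R (zeta p k - zeta l k))" by (rule sum.distrib)
    have s3: "(\<Sum>p\<in>?T. \<Sum>l\<in>UNIV. a p l *\<^sub>R (zeta p k - zeta l k)) = 0"
      by (rule lap_sum_zero) (use A4_asym in blast, use A4_ain in \<open>metis mem_Collect_eq\<close>)
    have s4: "(\<Sum>p\<in>?T. xi p k) = (\<Sum>p\<in>?T. xi k k)" by (intro sum.cong refl) (metis xicons mem_Collect_eq)
    have s5: "(\<Sum>p\<in>?T. xi k k) = real (card ?T) *\<^sub>R xi k k" by (rule sum_constant_scaleR)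
    have s6: "(\<Sum>p\<in>?T. xi p k) = (\<Sum>p\<in>?T. DJ p X $ k)" using s1 s2 s3 by simp
    show "real (card ?T) *\<^sub>R xi k k = (\<Sum>p\<in>?T. DJ p X $ k)" using s4 s5 s6 by metis
  qed
  have omf: "\<And>p k. k < nq p \<Longrightarrow> 0 \<le> om p k \<and> Brow p k \<bullet> xs p - bv p k \<le> 0
      \<and> om p k * (Brow p k \<bullet> xs p - bv p k) = 0 \<and> max 0 (om p k + (Brow p k \<bullet> xs p - bv p k)) = om p k"
  proof -
    fix p k assume "k < nq p"
    then have "- om p k + max 0 (om p k + (Brow p k \<bullet> xs p - bv p k)) = 0"
      using eq_om th0 ex by (simp add: algebra_simps)
    then show "0 \<le> om p k \<and> Brow p k \<bullet> xs p - bv p k \<le> 0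
      \<and> om p k * (Brow p k \<bullet> xs p - bv p k) = 0 \<and> max 0 (om p k + (Brow p k \<bullet> xs p - bv p k)) = om p k"
      by (rule om_rel)
  qed
  have kkt: "\<And>p. xi p p = - (transpose (G p) *v pplus (lam p) + (\<Sum>k<nq p. om p k *\<^sub>R Brow p k))"
  proof -
    fix p
    have sumeq: "(\<Sum>k<nq p. max 0 (om p k + Brow p k \<bullet> eta p - bv p k) *\<^sub>R Brow p k) = (\<Sum>k<nq p. om p k *\<^sub>R Brow p k)"
    proof (intro sum.cong refl)
      fix k assume "k \<in> {..<nq p}"
      then have "max 0 (om p k + (Brow p k \<bullet> xs p - bv p k)) = om p k" using omf by auto
      then show "max 0 (om p k + Brow p k \<bullet> eta p - bv p k) *\<^sub>R Brow p k = om p k *\<^sub>R Brow p k"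
        using ex by (simp add: algebra_simps)
    qed
    have e1: "- alpha *\<^sub>R th p - (xi p p + transpose (G p) *v pplus (lam p)
                      + (\<Sum>k<nq p. max 0 (om p k + Brow p k \<bullet> eta p - bv p k) *\<^sub>R Brow p k))
         = - (xi p p + transpose (G p) *v pplus (lam p) + (\<Sum>k<nq p. om p k *\<^sub>R Brow p k))"
      using th0[of p] sumeq by simp
    have "- (xi p p + transpose (G p) *v pplus (lam p) + (\<Sum>k<nq p. om p k *\<^sub>R Brow p k)) = 0"
      using eq_th[rule_format, of p] unfolding e1 .
    then have "xi p p + transpose (G p) *v pplus (lam p) + (\<Sum>k<nq p. om p k *\<^sub>R Brow p k) = 0"
      by (simp only: neg_equal_0_iff_equal)
    then show "xi p p = - (transpose (G p) *v pplus (lam p) + (\<Sum>k<nq p. om p k *\<^sub>R Brow p k))"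
      by (simp only: eq_neg_iff_add_eq_0 add.assoc)
  qed
  have lamcons: "\<And>p l. c l = c p \<Longrightarrow> pplus (lam l) = pplus (lam p)"
  proof -
    fix p l assume pl: "c l = c p"
    have "\<forall>l\<in>{l. c l = c p}. pplus (lam l) = pplus (lam p)"
    proof (rule consensus[where w=a and T="{l. c l = c p}" and q=p and V="\<lambda>l. pplus (lam l)"])
      show "\<forall>p l. a p l = 0 \<or> a p l = 1" by (rule A4_a01)
      show "\<forall>q\<in>{l. c l = c p} - {p}. (\<Sum>l\<in>UNIV. a q l *\<^sub>R (pplus (lam q) - pplus (lam l))) = 0" using eq_rho by blast
      show "\<forall>q l. q \<in> {l. c l = c p} \<longrightarrow> a q l \<noteq> 0 \<longrightarrow> l \<in> {l. c l = c p}"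
      proof (intro allI impI)
        fix q l assume "q \<in> {l. c l = c p}" "a q l \<noteq> 0"
        then show "l \<in> {l. c l = c p}" using A4_ain[rule_format, of q l] by simp
      qed
      show "\<forall>q\<in>{l. c l = c p}. (\<lambda>u z. a u z = 1)\<^sup>*\<^sup>* q p"
      proof
        fix q assume "q \<in> {l. c l = c p}"
        then show "(\<lambda>u z. a u z = 1)\<^sup>*\<^sup>* q p" using A4_aconn[rule_format, of q p] by simp
      qed
    qed simp
    then show "pplus (lam l) = pplus (lam p)" using pl by blast
  qed
  have slack: "\<And>p. inner (pplus (lam p)) (\<Sum>q\<in>{q. c q = c p}. G q *v xs q - g q) = 0"
  proof -
    fix p
    let ?T = "{q. c q = c p}"
    have each: "G q *v xs q - g q = (lam q - pplus (lam q)) + (\<Sum>l\<in>UNIV. a q l *\<^sub>R (rho q - rho l))" for q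
    proof (rule lam_rel)
      show "- lam q + pplus (lam q) + (G q *v xs q - g q) - (\<Sum>l\<in>UNIV. a q l *\<^sub>R (rho q - rho l)) - 0 = 0"
        using eq_lam[rule_format, of q] unfolding eq_rho[rule_format, of q] ex[of q] .
    qed
    have "(\<Sum>q\<in>?T. G q *v xs q - g q) = (\<Sum>q\<in>?T. lam q - pplus (lam q)) + (\<Sum>q\<in>?T. \<Sum>l\<in>UNIV. a q l *\<^sub>R (rho q - rho l))"
      unfolding each by (rule sum.distrib)
    also have "(\<Sum>q\<in>?T. \<Sum>l\<in>UNIV. a q l *\<^sub>R (rho q - rho l)) = 0"
      by (rule lap_sum_zero) (use A4_asym in blast, use A4_ain in \<open>metis mem_Collect_eq\<close>)
    finally have e: "(\<Sum>q\<in>?T. G q *v xs q - g q) = (\<Sum>q\<in>?T. lam q - pplus (lam q))" by simp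
    have "inner (pplus (lam p)) (\<Sum>q\<in>?T. lam q - pplus (lam q)) = (\<Sum>q\<in>?T. inner (pplus (lam p)) (lam q - pplus (lam q)))"
      by (rule inner_sum_right)
    also have "\<dots> = (\<Sum>q\<in>?T. inner (pplus (lam q)) (lam q - pplus (lam q)))"
    proof (intro sum.cong refl)
      fix q assume "q \<in> ?T"
      then have "pplus (lam q) = pplus (lam p)" using lamcons[of q p] by simp
      then show "inner (pplus (lam p)) (lam q - pplus (lam q)) = inner (pplus (lam q)) (lam q - pplus (lam q))"
        by (simp only:)
    qed
    also have "\<dots> = 0" by (simp add: pp_orth)
    finally show "inner (pplus (lam p)) (\<Sum>q\<in>?T. G q *v xs q - g q) = 0" using e by simp
  qed
  have XO: "\<forall>q. X $ q \<in> Omega nq Brow bv q"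
    using omf by (auto simp: Omega_def Xq)
  show ?thesis unfolding is_NE_def X_def[symmetric]
  proof (intro allI impI)
    fix i and y :: "(real^'r)^'a"
    assume ay: "(\<forall>q. c q \<noteq> i \<longrightarrow> y $ q = X $ q) \<and> feasible c nq Brow bv G g y"
    let ?T = "{q. c q = i}"
    have yoff: "\<And>q. c q \<noteq> i \<Longrightarrow> y $ q = X $ q" using ay by blast
    have yO: "\<forall>q. y $ q \<in> Omega nq Brow bv q" and yX: "y \<in> Xset c G g i"
      using ay by (auto simp: feasible_def)
    obtain p0 where p0: "c p0 = i" using coal_nonempty by blast
    define L where "L = pplus (lam p0)"
    have TT: "\<And>p. c p = i \<Longrightarrow> {q. c q = c p} = ?T" by auto
    have Lp: "\<And>p. c p = i \<Longrightarrow> pplus (lam p) = L"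
    proof -
      fix p assume "c p = i"
      then have "c p = c p0" using p0 by simp
      then show "pplus (lam p) = L" unfolding L_def by (rule lamcons)
    qed
    have tan: "inner (y - X) (DJ q X) \<le> J q y - J q X" if cq: "c q = i" for q
    proof (rule tangent)
      show "(J q has_derivative (\<lambda>h. inner h (DJ q X))) (at X)" using DJ by (simp add: gderiv_def)
      fix t :: real assume t: "0 \<le> t" "t \<le> 1"
      have sc: "strongly_convex_block c nq Brow bv (c q) hbar (J q)" using A1_sc by blast
      have pre: "\<forall>q'. c q' \<noteq> c q \<longrightarrow> X $ q' \<in> Omega nq Brow bv q' \<and> y $ q' = X $ q'"
        using XO yoff cq by auto
      have "J q ((1 - t) *\<^sub>R X + t *\<^sub>R y) \<le> (1 - t) * J q X + t * J q y - hbar / 2 * t * (1 - t) * (norm (X - y))\<^sup>2"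
        using sc pre t unfolding strongly_convex_block_def by blast
      moreover have "0 \<le> hbar / 2 * t * (1 - t) * (norm (X - y))\<^sup>2" using A1_hbar t by simp
      moreover have "(1 - t) *\<^sub>R X + t *\<^sub>R y = X + t *\<^sub>R (y - X)" by (simp add: algebra_simps)
      ultimately show "J q (X + t *\<^sub>R (y - X)) \<le> (1 - t) * J q X + t * J q y" by simp
    qed
    have isplit: "inner (y - X) D = (\<Sum>p\<in>?T. inner (y$p - X$p) (D$p))" for D :: "(real^'r)^'a"
    proof -
      have "inner (y - X) D = (\<Sum>p\<in>UNIV. inner (y$p - X$p) (D$p))" by (simp add: inner_vec_def)
      also have "\<dots> = (\<Sum>p\<in>?T. inner (y$p - X$p) (D$p))"
        by (rule sum.mono_neutral_right) (use yoff in auto)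
      finally show ?thesis .
    qed
    define m where "m = real (card ?T)"
    have mpos: "m > 0" unfolding m_def using p0 by (auto simp: card_gt_0_iff)
    have c1: "(\<Sum>q\<in>?T. \<Sum>p\<in>?T. inner (y$p - X$p) (DJ q X $ p)) \<le> (\<Sum>q\<in>?T. J q y - J q X)"
      using tan isplit by (intro sum_mono) auto
    have c2: "(\<Sum>q\<in>?T. \<Sum>p\<in>?T. inner (y$p - X$p) (DJ q X $ p)) = m * (\<Sum>p\<in>?T. inner (y$p - X$p) (xi p p))"
    proof -
      have "(\<Sum>q\<in>?T. \<Sum>p\<in>?T. inner (y$p - X$p) (DJ q X $ p)) = (\<Sum>p\<in>?T. \<Sum>q\<in>?T. inner (y$p - X$p) (DJ q X $ p))"
        by (rule sum.swap)
      also have "\<dots> = (\<Sum>p\<in>?T. inner (y$p - X$p) (\<Sum>q\<in>?T. DJ q X $ p))"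
        by (simp add: inner_sum_right)
      also have "\<dots> = (\<Sum>p\<in>?T. inner (y$p - X$p) (m *\<^sub>R xi p p))"
      proof (intro sum.cong refl)
        fix p assume "p \<in> ?T"
        then have "c p = i" by simp
        then show "inner (y$p - X$p) (\<Sum>q\<in>?T. DJ q X $ p) = inner (y$p - X$p) (m *\<^sub>R xi p p)"
          using xisum[of p] TT[of p] m_def by simp
      qed
      also have "\<dots> = m * (\<Sum>p\<in>?T. inner (y$p - X$p) (xi p p))"
        by (simp add: sum_distrib_left)
      finally show ?thesis .
    qed
    define A where "A = (\<lambda>p. inner L (G p *v (y$p - X$p)))"
    define B where "B = (\<lambda>p. \<Sum>k<nq p. om p k * inner (y$p - X$p) (Brow p k))"
    have termp: "inner (y$p - X$p) (xi p p) = - (A p + B p)" if "c p = i" for p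
    proof -
      have "inner (y$p - X$p) (xi p p) = inner (y$p - X$p) (- (transpose (G p) *v L + (\<Sum>k<nq p. om p k *\<^sub>R Brow p k)))"
        using kkt[of p] Lp[OF that] by simp
      also have "\<dots> = - (inner (y$p - X$p) (transpose (G p) *v L) + inner (y$p - X$p) (\<Sum>k<nq p. om p k *\<^sub>R Brow p k))"
        by (simp only: inner_minus_right inner_add_right)
      also have "inner (y$p - X$p) (transpose (G p) *v L) = A p" unfolding A_def by (rule transp_inner)
      also have "inner (y$p - X$p) (\<Sum>k<nq p. om p k *\<^sub>R Brow p k) = B p"
        unfolding B_def by (simp add: inner_sum_right)
      finally show ?thesis .
    qed
    have Bn: "B p \<le> 0" for p
      unfolding B_def
    proof (rule sum_nonpos)
      fix k assume k: "k \<in> {..<nq p}"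
      have o: "0 \<le> om p k" "om p k * (Brow p k \<bullet> xs p - bv p k) = 0" using omf k by auto
      have yb: "Brow p k \<bullet> y$p \<le> bv p k" using yO k by (auto simp: Omega_def)
      have "om p k * inner (y$p - X$p) (Brow p k) = om p k * (Brow p k \<bullet> y$p - bv p k) - om p k * (Brow p k \<bullet> xs p - bv p k)"
        by (simp add: Xq inner_diff_left inner_commute algebra_simps)
      also have "\<dots> \<le> 0"
      proof -
        have "om p k * (Brow p k \<bullet> y$p - bv p k) \<le> 0" using o(1) yb by (intro mult_nonneg_nonpos) auto
        then show ?thesis using o(2) by linarith
      qed
      finally show "om p k * inner (y$p - X$p) (Brow p k) \<le> 0" .
    qed
    have An: "(\<Sum>p\<in>?T. A p) \<le> 0"
    proof -
      have "(\<Sum>p\<in>?T. A p) = inner L (\<Sum>p\<in>?T. G p *v (y$p) - G p *v (X$p))"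
        unfolding A_def by (simp add: inner_sum_right matrix_vector_mult_diff_distrib)
      also have "(\<Sum>p\<in>?T. G p *v (y$p) - G p *v (X$p)) = (\<Sum>p\<in>?T. G p *v (y$p) - g p) - (\<Sum>p\<in>?T. G p *v xs p - g p)"
        by (simp add: Xq sum_subtractf)
      also have "inner L \<dots> = inner L (\<Sum>p\<in>?T. G p *v (y$p) - g p) - inner L (\<Sum>p\<in>?T. G p *v xs p - g p)"
        by (rule inner_diff_right)
      also have "inner L (\<Sum>p\<in>?T. G p *v xs p - g p) = 0"
        using slack[of p0] p0 L_def by simp
      also have "inner L (\<Sum>p\<in>?T. G p *v (y$p) - g p) \<le> 0"
      proof (rule inner_nonpos)
        show "\<forall>k. 0 \<le> L $ k" by (simp add: L_def pp_nonneg)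
        show "\<forall>k. (\<Sum>p\<in>?T. G p *v (y$p) - g p) $ k \<le> 0"
          using yX by (simp add: Xset_def sum_subtractf)
      qed
      finally show ?thesis by simp
    qed
    have nonneg: "0 \<le> (\<Sum>p\<in>?T. inner (y$p - X$p) (xi p p))"
    proof -
      have "(\<Sum>p\<in>?T. inner (y$p - X$p) (xi p p)) = (\<Sum>p\<in>?T. - (A p + B p))"
        using termp by (intro sum.cong) auto
      also have "\<dots> = - (\<Sum>p\<in>?T. A p) - (\<Sum>p\<in>?T. B p)"
        by (simp add: sum_negf sum_subtractf)
      finally show ?thesis using An Bn sum_nonpos[of ?T B] by simp
    qed
    have "0 \<le> m * (\<Sum>p\<in>?T. inner (y$p - X$p) (xi p p))" using nonneg mpos by simp
    then have "0 \<le> (\<Sum>q\<in>?T. J q y - J q X)" using c1 c2 by linarith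
    then have "(\<Sum>q\<in>?T. J q X) \<le> (\<Sum>q\<in>?T. J q y)" by (simp add: sum_subtractf)
    then show "coal_cost c J i X \<le> coal_cost c J i y"
      unfolding coal_cost_def using mpos m_def by (simp add: divide_right_mono)
  qed
qed

end
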